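(* Let $N$ be a lattice, $\sigma\subset N_{\mathbb R}$ a strongly convex rational polyhedral cone, and $\Delta$ a rational simplicial subdivision of $\sigma$ with ray generators $v_1,\ldots,v_s$. If $\lambda\in\Delta$ is a face of every maximal cone of $\Delta$, then $H_\Delta=H_{\operatorname{lk}\lambda}$, and $H_{\operatorname{lk}\gamma}=H_{\operatorname{lk}(\gamma+\lambda)}$ for every $\gamma\in\Delta$.
   Context: $v_1,\ldots,v_s$ are the primitive generators of the rays of $\Delta$, and $x^v$ ($v\in N$) denote monomials in the Laurent polynomial ring $\mathbb Z[N]$. "$v_i\in\tau$" means $v_i$ generates a ray of $\tau$. $H_\Delta=\sum_{\tau\in\Delta}\bigl(\prod_{v_i\in\tau}x^{v_i}\prod_{v_j\notin\tau}(1-x^{v_j})\bigr)$. The link $\operatorname{lk}\tau$ is the set of $\gamma\in\Delta$ with $\gamma\cap\tau=0$ and $\gamma+\tau\in\Delta$; $v_j\in\operatorname{lk}\tau$ means $v_j$ generates a ray of some cone of $\operatorname{lk}\tau$; $H_{\operatorname{lk}\tau}=\sum_{\gamma\in\operatorname{lk}\tau}\bigl(\prod_{v_i\in\gamma}x^{v_i}\prod_{v_j\in\operatorname{lk}\tau,\,v_j\notin\gamma}(1-x^{v_j})\bigr)$. *)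

theory Defs
  imports "HOL-Analysis.Analysis" "HOL-Library.Poly_Mapping"
begin

text \<open>The lattice N is modelled as int^'n (a lattice of rank CARD('n)), embedded in
  N_R = real^'n.  The Laurent polynomial ring Z[N] is the group ring (int^n =>0 int).\<close>

definition emb :: "int^'n \<Rightarrow> real^'n" where
  "emb v = (\<chi> i. of_int (v $ i))"

definition latpts :: "(real^'n) set" where
  "latpts = range emb"

definition monom :: "int^'n \<Rightarrow> (int^'n \<Rightarrow>\<^sub>0 int)" where
  "monom v = Poly_Mapping.single v 1"

definition cone_gen :: "(real^'n) set \<Rightarrow> (real^'n) set" where
  "cone_gen S = {\<Sum>v\<in>S. c v *\<^sub>R v | c. \<forall>v\<in>S. c v \<ge> 0}"

definition rational_polyhedral_cone :: "(real^'n) set \<Rightarrow> bool" where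
  "rational_polyhedral_cone \<sigma> \<longleftrightarrow> (\<exists>S. finite S \<and> S \<subseteq> latpts \<and> \<sigma> = cone_gen S)"

definition strongly_convex :: "(real^'n) set \<Rightarrow> bool" where
  "strongly_convex \<sigma> \<longleftrightarrow> (\<forall>x. x \<in> \<sigma> \<and> - x \<in> \<sigma> \<longrightarrow> x = 0)"

definition rational_simplicial_cone :: "(real^'n) set \<Rightarrow> bool" where
  "rational_simplicial_cone \<tau> \<longleftrightarrow>
     (\<exists>S. finite S \<and> S \<subseteq> latpts \<and> independent S \<and> \<tau> = cone_gen S)"

definition simplicial_fan :: "(real^'n) set set \<Rightarrow> bool" where
  "simplicial_fan \<Delta> \<longleftrightarrow> finite \<Delta> \<and>
     (\<forall>\<tau>\<in>\<Delta>. rational_simplicial_cone \<tau>) \<and>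
     (\<forall>\<tau>\<in>\<Delta>. \<forall>F. F face_of \<tau> \<and> F \<noteq> {} \<longrightarrow> F \<in> \<Delta>) \<and>
     (\<forall>\<tau>\<in>\<Delta>. \<forall>\<tau>'\<in>\<Delta>. (\<tau> \<inter> \<tau>') face_of \<tau> \<and> (\<tau> \<inter> \<tau>') face_of \<tau>')"

definition rational_simplicial_subdivision :: "(real^'n) set set \<Rightarrow> (real^'n) set \<Rightarrow> bool" where
  "rational_simplicial_subdivision \<Delta> \<sigma> \<longleftrightarrow> simplicial_fan \<Delta> \<and> \<Union>\<Delta> = \<sigma>"

definition maximal_cone :: "(real^'n) set set \<Rightarrow> (real^'n) set \<Rightarrow> bool" where
  "maximal_cone \<Delta> \<tau> \<longleftrightarrow> \<tau> \<in> \<Delta> \<and> \<not> (\<exists>\<tau>'\<in>\<Delta>. \<tau> \<subset> \<tau>')"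

definition rays_of :: "(real^'n) set set \<Rightarrow> (real^'n) set \<Rightarrow> (real^'n) set set" where
  "rays_of \<Delta> \<tau> = {\<rho> \<in> \<Delta>. aff_dim \<rho> = 1 \<and> \<rho> face_of \<tau>}"

definition prim :: "(real^'n) set \<Rightarrow> int^'n" where
  "prim \<rho> = (THE v. v \<noteq> 0 \<and> emb v \<in> \<rho> \<and>
      (\<forall>w. emb w \<in> \<rho> \<longrightarrow> (\<exists>k::int. k \<ge> 0 \<and> w = (\<chi> i. k * v $ i))))"

definition msum :: "(real^'n) set \<Rightarrow> (real^'n) set \<Rightarrow> (real^'n) set" where
  "msum A B = {x + y | x y. x \<in> A \<and> y \<in> B}"

definition lk :: "(real^'n) set set \<Rightarrow> (real^'n) set \<Rightarrow> (real^'n) set set" where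
  "lk \<Delta> \<tau> = {\<gamma> \<in> \<Delta>. \<gamma> \<inter> \<tau> = {0} \<and> msum \<gamma> \<tau> \<in> \<Delta>}"

text \<open>H for a collection C of cones of \<Delta>; the variables are the rays of cones of C.\<close>
definition Hpoly :: "(real^'n) set set \<Rightarrow> (real^'n) set set \<Rightarrow> (int^'n \<Rightarrow>\<^sub>0 int)" where
  "Hpoly \<Delta> C = (\<Sum>\<tau>\<in>C. (\<Prod>\<rho>\<in>rays_of \<Delta> \<tau>. monom (prim \<rho>)) *
       (\<Prod>\<rho>\<in>(\<Union>\<gamma>\<in>C. rays_of \<Delta> \<gamma>) - rays_of \<Delta> \<tau>. 1 - monom (prim \<rho>)))"

end

theory Submission
  imports Defs
begin

lemma cg_zero: "0 \<in> cone_gen S"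
  unfolding cone_gen_def by (rule CollectI, rule exI[of _ "\<lambda>_. 0"]) auto

lemma cg_empty: "cone_gen {} = {0}"
  unfolding cone_gen_def by auto

lemma cg_add: assumes "finite S" "x \<in> cone_gen S" "y \<in> cone_gen S" shows "x + y \<in> cone_gen S"
proof -
  obtain c where c: "x = (\<Sum>v\<in>S. c v *\<^sub>R v)" "\<forall>v\<in>S. c v \<ge> 0" using assms(2) unfolding cone_gen_def by auto
  obtain d where d: "y = (\<Sum>v\<in>S. d v *\<^sub>R v)" "\<forall>v\<in>S. d v \<ge> 0" using assms(3) unfolding cone_gen_def by auto
  have "x + y = (\<Sum>v\<in>S. (c v + d v) *\<^sub>R v)" using c d by (simp add: scaleR_add_left sum.distrib)
  then show ?thesis using c d unfolding cone_gen_def by (auto intro!: exI[of _ "\<lambda>v. c v + d v"])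
qed

lemma cg_scale: assumes "t \<ge> 0" "x \<in> cone_gen S" shows "t *\<^sub>R x \<in> cone_gen S"
proof -
  obtain c where c: "x = (\<Sum>v\<in>S. c v *\<^sub>R v)" "\<forall>v\<in>S. c v \<ge> 0" using assms(2) unfolding cone_gen_def by auto
  have "t *\<^sub>R x = (\<Sum>v\<in>S. (t * c v) *\<^sub>R v)" using c by (simp add: scaleR_sum_right)
  then show ?thesis using c assms(1) unfolding cone_gen_def by (auto intro!: exI[of _ "\<lambda>v. t * c v"])
qed

lemma cg_base: assumes "finite S" "v \<in> S" shows "v \<in> cone_gen S"
proof -
  have "(\<Sum>w\<in>S. (if w = v then 1 else 0) *\<^sub>R w) = (\<Sum>w\<in>S. if w = v then v else 0)"
    by (rule sum.cong) auto
  then have "v = (\<Sum>w\<in>S. (if w = v then 1 else 0) *\<^sub>R w)" using assms by simp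
  then show ?thesis unfolding cone_gen_def by (auto intro!: exI[of _ "\<lambda>w. if w = v then 1 else 0"])
qed

lemma cg_mono: assumes "finite B" "A \<subseteq> B" shows "cone_gen A \<subseteq> cone_gen B"
proof
  fix x assume "x \<in> cone_gen A"
  then obtain c where c: "x = (\<Sum>v\<in>A. c v *\<^sub>R v)" "\<forall>v\<in>A. c v \<ge> 0" unfolding cone_gen_def by auto
  define d where "d v = (if v \<in> A then c v else 0)" for v
  have "x = (\<Sum>v\<in>B. d v *\<^sub>R v)" unfolding c d_def
    by (rule sum.mono_neutral_cong_left) (use assms in auto)
  then show "x \<in> cone_gen B" using c unfolding cone_gen_def d_def by (auto intro!: exI[of _ d] simp: d_def)
qed

lemma sum_in_closed:
  assumes "finite A" "0 \<in> K" "\<And>x y. x \<in> K \<Longrightarrow> y \<in> K \<Longrightarrow> x + y \<in> K" "\<And>a. a \<in> A \<Longrightarrow> f a \<in> K"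
  shows "sum f A \<in> K"
  using assms by (induction A rule: finite_induct) auto

lemma cg_sub:
  assumes "finite S" "0 \<in> K" "\<And>x y. x \<in> K \<Longrightarrow> y \<in> K \<Longrightarrow> x + y \<in> K"
    "\<And>t x. t \<ge> 0 \<Longrightarrow> x \<in> K \<Longrightarrow> t *\<^sub>R x \<in> K" "S \<subseteq> K"
  shows "cone_gen S \<subseteq> K"
proof
  fix x assume "x \<in> cone_gen S"
  then obtain c where c: "x = (\<Sum>v\<in>S. c v *\<^sub>R v)" "\<forall>v\<in>S. c v \<ge> 0" unfolding cone_gen_def by auto
  show "x \<in> K" unfolding c(1) by (rule sum_in_closed) (use assms c in auto)
qed

lemma convex_cg: assumes "finite S" shows "convex (cone_gen S)"
  unfolding convex_def using cg_add[OF assms] cg_scale by blast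

lemma cg_union: assumes "finite A" "finite B" shows "msum (cone_gen A) (cone_gen B) = cone_gen (A \<union> B)"
proof
  show "msum (cone_gen A) (cone_gen B) \<subseteq> cone_gen (A \<union> B)"
    unfolding msum_def using cg_mono[of "A \<union> B" A] cg_mono[of "A \<union> B" B] assms cg_add[of "A \<union> B"] by blast
next
  show "cone_gen (A \<union> B) \<subseteq> msum (cone_gen A) (cone_gen B)"
  proof
    fix x assume "x \<in> cone_gen (A \<union> B)"
    then obtain c where c: "x = (\<Sum>v\<in>A \<union> B. c v *\<^sub>R v)" "\<forall>v\<in>A \<union> B. c v \<ge> 0" unfolding cone_gen_def by auto
    have "x = (\<Sum>v\<in>A. c v *\<^sub>R v) + (\<Sum>v\<in>B - A. c v *\<^sub>R v)"
    proof -
      have e: "A \<union> B = A \<union> (B - A)" by blast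
      show ?thesis unfolding c(1) e by (rule sum.union_disjoint) (use assms in auto)
    qed
    moreover have "(\<Sum>v\<in>A. c v *\<^sub>R v) \<in> cone_gen A" using c unfolding cone_gen_def by auto
    moreover have "(\<Sum>v\<in>B - A. c v *\<^sub>R v) \<in> cone_gen B"
      using cg_mono[of B "B - A"] assms c unfolding cone_gen_def by blast
    ultimately show "x \<in> msum (cone_gen A) (cone_gen B)" unfolding msum_def by blast
  qed
qed

definition coef :: "(real^'n) set \<Rightarrow> real^'n \<Rightarrow> real^'n \<Rightarrow> real" where
  "coef S w = (SOME g. linear g \<and> (\<forall>v\<in>S. g v = (if v = w then 1 else 0)))"

lemma coef_prop: assumes "independent S"
  shows "linear (coef S w) \<and> (\<forall>v\<in>S. coef S w v = (if v = w then 1 else 0))"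
proof -
  obtain g where g: "linear g" "\<forall>v\<in>S. g v = (if v = w then 1 else (0::real))"
    using linear_independent_extend[OF assms, of "\<lambda>v. if v = w then 1 else (0::real)"] by auto
  show ?thesis unfolding coef_def by (rule someI[of _ g]) (use g in simp)
qed

lemma coef_sum: assumes "independent S" "A \<subseteq> S" "finite A" "w \<in> S"
  shows "coef S w (\<Sum>v\<in>A. c v *\<^sub>R v) = (if w \<in> A then c w else 0)"
proof -
  have l: "linear (coef S w)" and e: "\<forall>v\<in>S. coef S w v = (if v = w then 1 else 0)"
    using coef_prop[OF assms(1)] by auto
  have "coef S w (\<Sum>v\<in>A. c v *\<^sub>R v) = (\<Sum>v\<in>A. c v * coef S w v)"
    by (simp add: linear_sum[OF l] linear_scale[OF l] o_def)
  also have "\<dots> = (\<Sum>v\<in>A. if v = w then c w else 0)"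
    by (rule sum.cong) (use e assms(2) in auto)
  also have "\<dots> = (if w \<in> A then c w else 0)" using assms(3) by (simp add: sum.delta')
  finally show ?thesis .
qed

lemma cg_repr: assumes "independent S" "finite S" "x \<in> cone_gen S"
  shows "x = (\<Sum>w\<in>S. coef S w x *\<^sub>R w) \<and> (\<forall>w\<in>S. coef S w x \<ge> 0)"
proof -
  obtain c where c: "x = (\<Sum>v\<in>S. c v *\<^sub>R v)" "\<forall>v\<in>S. c v \<ge> 0" using assms(3) unfolding cone_gen_def by auto
  have "\<forall>w\<in>S. coef S w x = c w" using coef_sum[OF assms(1) order_refl assms(2)] c(1) by simp
  then show ?thesis using c by (auto intro: sum.cong)
qed

lemma mem_cg: assumes "independent S" "finite S" "T \<subseteq> S"
  shows "x \<in> cone_gen T \<longleftrightarrow> x \<in> cone_gen S \<and> (\<forall>w\<in>S - T. coef S w x = 0)"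
proof
  assume x: "x \<in> cone_gen T"
  then obtain c where c: "x = (\<Sum>v\<in>T. c v *\<^sub>R v)" "\<forall>v\<in>T. c v \<ge> 0" unfolding cone_gen_def by auto
  have fT: "finite T" using assms finite_subset by blast
  show "x \<in> cone_gen S \<and> (\<forall>w\<in>S - T. coef S w x = 0)"
    using cg_mono[OF assms(2,3)] x coef_sum[OF assms(1,3) fT] c(1) by auto
next
  assume x: "x \<in> cone_gen S \<and> (\<forall>w\<in>S - T. coef S w x = 0)"
  have r: "x = (\<Sum>w\<in>S. coef S w x *\<^sub>R w)" "\<forall>w\<in>S. coef S w x \<ge> 0" using cg_repr[OF assms(1,2)] x by auto
  have "(\<Sum>w\<in>S. coef S w x *\<^sub>R w) = (\<Sum>w\<in>T. coef S w x *\<^sub>R w)"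
    by (rule sum.mono_neutral_right) (use assms x in auto)
  then have "x = (\<Sum>w\<in>T. coef S w x *\<^sub>R w)" using r(1) by simp
  then show "x \<in> cone_gen T" using r(2) assms(3) unfolding cone_gen_def by (auto intro!: exI[of _ "\<lambda>w. coef S w x"])
qed

lemma cg_inter: assumes "independent S" "finite S" "A \<subseteq> S" "B \<subseteq> S"
  shows "cone_gen A \<inter> cone_gen B = cone_gen (A \<inter> B)"
proof (rule set_eqI)
  fix x
  have "A \<inter> B \<subseteq> S" using assms by blast
  have "x \<in> cone_gen A \<longleftrightarrow> x \<in> cone_gen S \<and> (\<forall>w\<in>S - A. coef S w x = 0)" using mem_cg[OF assms(1,2,3)] .
  moreover have "x \<in> cone_gen B \<longleftrightarrow> x \<in> cone_gen S \<and> (\<forall>w\<in>S - B. coef S w x = 0)" using mem_cg[OF assms(1,2,4)] .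
  moreover have "x \<in> cone_gen (A \<inter> B) \<longleftrightarrow> x \<in> cone_gen S \<and> (\<forall>w\<in>S - (A \<inter> B). coef S w x = 0)"
    using mem_cg[OF assms(1,2) \<open>A \<inter> B \<subseteq> S\<close>] .
  ultimately show "x \<in> cone_gen A \<inter> cone_gen B \<longleftrightarrow> x \<in> cone_gen (A \<inter> B)" by blast
qed

lemma cg_mem_gen: assumes "independent S" "finite S" "T \<subseteq> S" "v \<in> S"
  shows "v \<in> cone_gen T \<longleftrightarrow> v \<in> T"
proof
  assume "v \<in> cone_gen T"
  moreover have "coef S v v = 1" using coef_prop[OF assms(1)] assms(4) by auto
  ultimately show "v \<in> T" using mem_cg[OF assms(1,2,3)] assms(4) by force
next
  assume "v \<in> T"
  moreover have "finite T" using assms(2,3) by (rule finite_subset[rotated])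
  ultimately show "v \<in> cone_gen T" by (rule cg_base[rotated])
qed

lemma cg_inj: assumes "independent S" "finite S" "A \<subseteq> S" "B \<subseteq> S" "cone_gen A = cone_gen B"
  shows "A = B"
proof -
  have a: "A = {v \<in> S. v \<in> cone_gen A}" using cg_mem_gen[OF assms(1,2,3)] assms(3) by auto
  have b: "B = {v \<in> S. v \<in> cone_gen B}" using cg_mem_gen[OF assms(1,2,4)] assms(4) by auto
  show ?thesis using a b assms(5) by simp
qed

lemma cg_eq_zero: assumes "independent S" "finite S" "A \<subseteq> S"
  shows "cone_gen A = {0} \<longleftrightarrow> A = {}"
proof
  assume z: "cone_gen A = {0}"
  have n0: "0 \<notin> S" using assms(1) dependent_zero by metis
  show "A = {}"
  proof (rule ccontr)
    assume "A \<noteq> {}"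
    then obtain v where vA: "v \<in> A" by blast
    then have vS: "v \<in> S" using assms(3) by blast
    have "v \<in> cone_gen A" using cg_mem_gen[OF assms vS] vA by simp
    then have "v = 0" using z by simp
    then show False using n0 vS by simp
  qed
qed (simp add: cg_empty)

lemma cg_face: assumes "independent S" "finite S" "T \<subseteq> S"
  shows "cone_gen T face_of cone_gen S"
  unfolding face_of_def
proof (intro conjI ballI impI)
  show "cone_gen T \<subseteq> cone_gen S" by (rule cg_mono[OF assms(2,3)])
  show "convex (cone_gen T)" using convex_cg assms finite_subset by blast
next
  fix a b x assume a: "a \<in> cone_gen S" and b: "b \<in> cone_gen S" and x: "x \<in> cone_gen T"
    and s: "x \<in> open_segment a b"
  obtain u where u: "0 < u" "u < 1" "x = (1 - u) *\<^sub>R a + u *\<^sub>R b" using s by (auto simp: in_segment)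
  have "\<forall>w\<in>S - T. coef S w a = 0 \<and> coef S w b = 0"
  proof
    fix w assume w: "w \<in> S - T"
    have l: "linear (coef S w)" using coef_prop[OF assms(1)] by auto
    have "coef S w x = (1 - u) * coef S w a + u * coef S w b"
      using u(3) by (simp add: linear_add[OF l] linear_scale[OF l])
    moreover have "coef S w x = 0" using mem_cg[OF assms] x w by auto
    moreover have "coef S w a \<ge> 0" "coef S w b \<ge> 0" using cg_repr[OF assms(1,2)] a b w by auto
    ultimately show "coef S w a = 0 \<and> coef S w b = 0" using u
      by (smt (verit, best) mult_pos_pos mult_nonneg_nonneg)
  qed
  then show "a \<in> cone_gen T" "b \<in> cone_gen T" using mem_cg[OF assms] a b by auto
qed

lemma face_cg: assumes "independent S" "finite S" "F face_of cone_gen S" "0 \<in> F"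
  shows "F = cone_gen {v \<in> S. v \<in> F}"
proof -
  have FK: "F \<subseteq> cone_gen S" and cF: "convex F" using assms(3) face_of_imp_subset face_of_imp_convex by auto
  have sc: "t *\<^sub>R x \<in> F" if "t \<ge> 0" "x \<in> F" for t x
  proof (cases "x = 0 \<or> t \<le> 1")
    case True
    then show ?thesis
    proof
      assume "x = 0" then show ?thesis using that by simp
    next
      assume "t \<le> 1"
      have "(1 - t) *\<^sub>R 0 + t *\<^sub>R x \<in> F"
        using convexD_alt[OF cF assms(4) that(2), of t] that \<open>t \<le> 1\<close> by simp
      then show ?thesis by simp
    qed
  next
    case False
    then have x0: "x \<noteq> 0" and t1: "t > 1" by auto
    have tx: "t *\<^sub>R x \<in> cone_gen S" using cg_scale that FK by blast
    have "x \<in> open_segment 0 (t *\<^sub>R x)" unfolding in_segment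
      using x0 t1 by (auto intro!: exI[of _ "1/t"])
    then show ?thesis using face_ofD[OF assms(3) _ cg_zero tx that(2)] by blast
  qed
  have ad: "x + y \<in> F" if "x \<in> F" "y \<in> F" for x y
  proof -
    have "(1/2) *\<^sub>R x + (1/2) *\<^sub>R y \<in> F" using convexD[OF cF that, of "1/2" "1/2"] by simp
    from sc[OF _ this, of 2] show ?thesis by (simp add: scaleR_add_right)
  qed
  have sub: "cone_gen {v \<in> S. v \<in> F} \<subseteq> F"
  proof (rule cg_sub)
    show "finite {v \<in> S. v \<in> F}" using assms(2) by simp
  qed (use assms(4) sc ad in blast)+
  have "F \<subseteq> cone_gen {v \<in> S. v \<in> F}"
  proof
    fix x assume xF: "x \<in> F"
    then have xK: "x \<in> cone_gen S" using FK by auto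
    define c where "c w = coef S w x" for w
    have r: "x = (\<Sum>w\<in>S. c w *\<^sub>R w)" "\<forall>w\<in>S. c w \<ge> 0" using cg_repr[OF assms(1,2) xK] unfolding c_def by auto
    have inF: "v \<in> F" if v: "v \<in> S" "c v > 0" for v
    proof -
      define c' where "c' w = (if w = v then 0 else c w)" for w
      have "(\<Sum>w\<in>S. c w *\<^sub>R w) = c v *\<^sub>R v + (\<Sum>w\<in>S - {v}. c w *\<^sub>R w)"
        using v assms(2) by (simp add: sum.remove)
      moreover have "(\<Sum>w\<in>S. c' w *\<^sub>R w) = c' v *\<^sub>R v + (\<Sum>w\<in>S - {v}. c' w *\<^sub>R w)"
        using v assms(2) by (simp add: sum.remove)
      moreover have "(\<Sum>w\<in>S - {v}. c' w *\<^sub>R w) = (\<Sum>w\<in>S - {v}. c w *\<^sub>R w)"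
        unfolding c'_def by (rule sum.cong) auto
      moreover have "c' v = 0" by (simp add: c'_def)
      ultimately have xr: "x = c v *\<^sub>R v + (\<Sum>w\<in>S. c' w *\<^sub>R w)" using r by simp
      have rK: "(\<Sum>w\<in>S. c' w *\<^sub>R w) \<in> cone_gen S" unfolding cone_gen_def using r(2) by (auto simp: c'_def)
      define a where "a = (2 * c v) *\<^sub>R v"
      define b where "b = 2 *\<^sub>R (\<Sum>w\<in>S. c' w *\<^sub>R w)"
      have aK: "a \<in> cone_gen S" unfolding a_def by (rule cg_scale) (use cg_base assms(2) v in auto)
      have bK: "b \<in> cone_gen S" unfolding b_def by (rule cg_scale) (use rK in auto)
      have xab: "x = (1 - 1/2) *\<^sub>R a + (1/2) *\<^sub>R b" unfolding a_def b_def xr by simp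
      have "a \<in> F"
      proof (cases "a = b")
        case True then have "x = a" using xab scaleR_collapse by metis
        then show ?thesis using xF by simp
      next
        case False
        then have "x \<in> open_segment a b" unfolding in_segment using xab by (auto intro!: exI[of _ "1/2"])
        then show ?thesis using face_ofD[OF assms(3) _ aK bK xF] by blast
      qed
      from sc[OF _ this, of "1 / (2 * c v)"] show "v \<in> F" using v unfolding a_def by simp
    qed
    have "x = (\<Sum>w\<in>{v \<in> S. v \<in> F}. c w *\<^sub>R w)"
      unfolding r(1)
      by (rule sum.mono_neutral_right) (use assms(2) inF r(2) in \<open>auto simp: not_less\<close>)
    then show "x \<in> cone_gen {v \<in> S. v \<in> F}" unfolding cone_gen_def using r(2) by auto
  qed
  then show ?thesis using sub by blast
qed

lemma aff_dim_cg: assumes "independent T" "finite T"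
  shows "aff_dim (cone_gen T) = int (card T)"
proof -
  have "0 \<in> affine hull (cone_gen T)" by (rule hull_inc[OF cg_zero])
  then have "aff_dim (cone_gen T) = int (dim ((+) (- 0) ` cone_gen T))" by (rule aff_dim_eq_dim)
  then have 1: "aff_dim (cone_gen T) = int (dim (cone_gen T))" by simp
  have s1: "cone_gen T \<subseteq> span T"
  proof (rule cg_sub)
    show "finite T" by (rule assms(2))
    show "0 \<in> span T" by (rule span_zero)
    show "T \<subseteq> span T" by (rule span_superset)
  qed (simp_all add: span_add span_scale)
  have s2: "T \<subseteq> span (cone_gen T)"
  proof
    fix v assume "v \<in> T"
    then have "v \<in> cone_gen T" using cg_base assms(2) by blast
    then show "v \<in> span (cone_gen T)" by (rule span_base)
  qed
  have 2: "span (cone_gen T) = span T" using s1 s2 span_eq by blast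
  have "dim (cone_gen T) = dim (span (cone_gen T))" by simp
  also have "\<dots> = dim T" using 2 by simp
  also have "\<dots> = card T" by (rule dim_eq_card_independent[OF assms(1)])
  finally show ?thesis using 1 by simp
qed


definition gfun :: "('r \<Rightarrow> 'a::comm_ring_1) \<Rightarrow> 'r set \<Rightarrow> 'r set \<Rightarrow> 'a" where
  "gfun m U E = (\<Prod>\<rho>\<in>E. m \<rho>) * (\<Prod>\<rho>\<in>U - E. 1 - m \<rho>)"

lemma comb:
  fixes m :: "'r \<Rightarrow> 'a::comm_ring_1"
  assumes fX: "finite X" and fA: "\<And>A. A \<in> X \<Longrightarrow> finite A" and dA: "\<And>A. A \<in> X \<Longrightarrow> A \<inter> L = {}"
    and fL: "finite L" and ne: "X \<noteq> {}"
  shows "(\<Sum>E\<in>(\<lambda>(A,B). A \<union> B) ` (X \<times> Pow L). gfun m (\<Union>((\<lambda>(A,B). A \<union> B) ` (X \<times> Pow L))) E)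
       = (\<Sum>A\<in>X. gfun m (\<Union>X) A)"
proof -
  define U2 where "U2 = \<Union>X"
  have U: "\<Union>((\<lambda>(A,B). A \<union> B) ` (X \<times> Pow L)) = U2 \<union> L"
  proof
    show "\<Union>((\<lambda>(A,B). A \<union> B) ` (X \<times> Pow L)) \<subseteq> U2 \<union> L" unfolding U2_def by auto
  next
    obtain A0 where A0: "A0 \<in> X" using ne by blast
    show "U2 \<union> L \<subseteq> \<Union>((\<lambda>(A,B). A \<union> B) ` (X \<times> Pow L))"
    proof
      fix x assume "x \<in> U2 \<union> L"
      then show "x \<in> \<Union>((\<lambda>(A,B). A \<union> B) ` (X \<times> Pow L))"
      proof
        assume "x \<in> U2"
        then obtain A where "A \<in> X" "x \<in> A" unfolding U2_def by blast
        then show ?thesis by (intro UnionI[of "A \<union> {}"]) (auto intro!: image_eqI[of _ _ "(A, {})"])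
      next
        assume "x \<in> L"
        then show ?thesis using A0 by (intro UnionI[of "A0 \<union> L"]) (auto intro!: image_eqI[of _ _ "(A0, L)"])
      qed
    qed
  qed
  have fU2: "finite U2" unfolding U2_def using fX fA by blast
  have dU2: "U2 \<inter> L = {}" unfolding U2_def using dA by blast
  have inj: "inj_on (\<lambda>(A,B). A \<union> B) (X \<times> Pow L)"
  proof (rule inj_onI, clarify)
    fix A B A' B' assume h: "A \<in> X" "B \<subseteq> L" "A' \<in> X" "B' \<subseteq> L" "A \<union> B = A' \<union> B'"
    have "A = (A \<union> B) - L" using dA[OF h(1)] h(2) by blast
    moreover have "A' = (A' \<union> B') - L" using dA[OF h(3)] h(4) by blast
    moreover have "B = (A \<union> B) \<inter> L" using dA[OF h(1)] h(2) by blast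
    moreover have "B' = (A' \<union> B') \<inter> L" using dA[OF h(3)] h(4) by blast
    ultimately show "A = A' \<and> B = B'" using h(5) by simp
  qed
  have pL: "(\<Sum>B\<in>Pow L. (\<Prod>\<rho>\<in>B. m \<rho>) * (\<Prod>\<rho>\<in>L - B. 1 - m \<rho>)) = 1"
    using prod_add[OF fL, of m "\<lambda>\<rho>. 1 - m \<rho>"] by simp
  have gsplit: "gfun m (U2 \<union> L) (A \<union> B) =
      gfun m U2 A * ((\<Prod>\<rho>\<in>B. m \<rho>) * (\<Prod>\<rho>\<in>L - B. 1 - m \<rho>))" if h: "A \<in> X" "B \<subseteq> L" for A B
  proof -
    have fa: "finite A" using fA[OF h(1)] .
    have fb: "finite B" using fL h(2) finite_subset by blast
    have AU: "A \<subseteq> U2" unfolding U2_def using h(1) by blast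
    have dAB: "A \<inter> B = {}" using dA[OF h(1)] h(2) by blast
    have e: "(U2 \<union> L) - (A \<union> B) = (U2 - A) \<union> (L - B)" using dU2 h(2) AU by blast
    have d2: "(U2 - A) \<inter> (L - B) = {}" using dU2 by blast
    have "(\<Prod>\<rho>\<in>A \<union> B. m \<rho>) = (\<Prod>\<rho>\<in>A. m \<rho>) * (\<Prod>\<rho>\<in>B. m \<rho>)"
      by (rule prod.union_disjoint[OF fa fb dAB])
    moreover have "(\<Prod>\<rho>\<in>(U2 \<union> L) - (A \<union> B). 1 - m \<rho>) = (\<Prod>\<rho>\<in>U2 - A. 1 - m \<rho>) * (\<Prod>\<rho>\<in>L - B. 1 - m \<rho>)"
      unfolding e by (rule prod.union_disjoint) (use fU2 fL d2 in auto)
    ultimately show ?thesis unfolding gfun_def by (simp add: ac_simps)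
  qed
  have "(\<Sum>E\<in>(\<lambda>(A,B). A \<union> B) ` (X \<times> Pow L). gfun m (U2 \<union> L) E)
      = (\<Sum>p\<in>X \<times> Pow L. gfun m (U2 \<union> L) ((\<lambda>(A,B). A \<union> B) p))"
    by (rule sum.reindex[OF inj, unfolded o_def])
  also have "\<dots> = (\<Sum>(A,B)\<in>X \<times> Pow L. gfun m (U2 \<union> L) (A \<union> B))"
    by (rule sum.cong) auto
  also have "\<dots> = (\<Sum>A\<in>X. \<Sum>B\<in>Pow L. gfun m (U2 \<union> L) (A \<union> B))"
    by (rule sum.cartesian_product[symmetric])
  also have "\<dots> = (\<Sum>A\<in>X. \<Sum>B\<in>Pow L. gfun m U2 A * ((\<Prod>\<rho>\<in>B. m \<rho>) * (\<Prod>\<rho>\<in>L - B. 1 - m \<rho>)))"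
    by (rule sum.cong[OF refl], rule sum.cong[OF refl]) (use gsplit in auto)
  also have "\<dots> = (\<Sum>A\<in>X. gfun m U2 A)"
    by (simp add: sum_distrib_left[symmetric] pL)
  finally show ?thesis unfolding U U2_def .
qed

lemma Hpoly_img: assumes "inj_on (rays_of \<Delta>) C"
  shows "Hpoly \<Delta> C = (\<Sum>A\<in>rays_of \<Delta> ` C. gfun (\<lambda>\<rho>. monom (prim \<rho>)) (\<Union>(rays_of \<Delta> ` C)) A)"
  unfolding Hpoly_def gfun_def by (rule sum.reindex[OF assms, unfolded o_def, symmetric])


lemma fanD1: "simplicial_fan \<Delta> \<Longrightarrow> finite \<Delta>"
  by (simp only: simplicial_fan_def)
lemma fanD2: "simplicial_fan \<Delta> \<Longrightarrow> \<tau> \<in> \<Delta> \<Longrightarrow> rational_simplicial_cone \<tau>"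
  by (simp only: simplicial_fan_def)
lemma fanD3: "simplicial_fan \<Delta> \<Longrightarrow> \<tau> \<in> \<Delta> \<Longrightarrow> F face_of \<tau> \<Longrightarrow> F \<noteq> {} \<Longrightarrow> F \<in> \<Delta>"
  unfolding simplicial_fan_def by (elim conjE) blast
lemma fanD4: "simplicial_fan \<Delta> \<Longrightarrow> \<tau> \<in> \<Delta> \<Longrightarrow> \<tau>' \<in> \<Delta> \<Longrightarrow> (\<tau> \<inter> \<tau>') face_of \<tau>'"
  unfolding simplicial_fan_def by (elim conjE) blast

lemma fan_cone: assumes "simplicial_fan \<Delta>" "\<tau> \<in> \<Delta>"
  obtains S where "finite S" "independent S" "\<tau> = cone_gen S"
proof -
  have "rational_simplicial_cone \<tau>" by (rule fanD2[OF assms])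
  then show ?thesis using that unfolding rational_simplicial_cone_def by blast
qed

lemma fan_zero: assumes "simplicial_fan \<Delta>" "\<tau> \<in> \<Delta>" shows "0 \<in> \<tau>"
proof -
  obtain S where "\<tau> = cone_gen S" using fan_cone[OF assms] by blast
  then show ?thesis using cg_zero by simp
qed

lemma fan_max: assumes "simplicial_fan \<Delta>" "\<tau> \<in> \<Delta>"
  obtains \<mu> where "maximal_cone \<Delta> \<mu>" "\<tau> \<subseteq> \<mu>"
proof -
  have "finite \<Delta>" by (rule fanD1[OF assms(1)])
  from finite_has_maximal2[OF this assms(2)] obtain m where
    m: "m \<in> \<Delta>" "\<tau> \<subseteq> m" "\<forall>b\<in>\<Delta>. m \<subseteq> b \<longrightarrow> m = b" by blast
  have "maximal_cone \<Delta> m" unfolding maximal_cone_def using m by blast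
  then show ?thesis using that m(2) by blast
qed

lemma fan_sub_face: assumes "simplicial_fan \<Delta>" "\<tau> \<in> \<Delta>" "\<mu> \<in> \<Delta>" "\<tau> \<subseteq> \<mu>"
  shows "\<tau> face_of \<mu>"
proof -
  have "(\<tau> \<inter> \<mu>) face_of \<mu>" by (rule fanD4[OF assms(1-3)])
  moreover have "\<tau> \<inter> \<mu> = \<tau>" using assms(4) by blast
  ultimately show ?thesis by simp
qed

lemma fan_face_in: assumes "simplicial_fan \<Delta>" "\<mu> \<in> \<Delta>" "F face_of \<mu>" "0 \<in> F"
  shows "F \<in> \<Delta>"
  using fanD3[OF assms(1-3)] assms(4) by blast

lemma loc_face: assumes "simplicial_fan \<Delta>" "cone_gen S \<in> \<Delta>" "finite S" "independent S"
  "\<psi> \<in> \<Delta>" "\<psi> \<subseteq> cone_gen S"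
  obtains T where "T \<subseteq> S" "\<psi> = cone_gen T"
proof -
  have "\<psi> face_of cone_gen S" by (rule fan_sub_face[OF assms(1,5,2,6)])
  then have "\<psi> = cone_gen {v \<in> S. v \<in> \<psi>}" by (rule face_cg[OF assms(4,3) _ fan_zero[OF assms(1,5)]])
  then show ?thesis by (rule that[rotated]) blast
qed

lemma loc_in: assumes "simplicial_fan \<Delta>" "cone_gen S \<in> \<Delta>" "finite S" "independent S" "T \<subseteq> S"
  shows "cone_gen T \<in> \<Delta>"
  by (rule fan_face_in[OF assms(1,2) cg_face[OF assms(4,3,5)] cg_zero])

lemma loc_rays: assumes "simplicial_fan \<Delta>" "cone_gen S \<in> \<Delta>" "finite S" "independent S" "T \<subseteq> S"
  shows "rays_of \<Delta> (cone_gen T) = (\<lambda>v. cone_gen {v}) ` T"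
proof -
  have fT: "finite T" using assms(3,5) finite_subset by blast
  have iT: "independent T" using assms(4,5) independent_mono by blast
  have inT: "cone_gen T \<in> \<Delta>" by (rule loc_in[OF assms])
  show ?thesis
  proof
    show "rays_of \<Delta> (cone_gen T) \<subseteq> (\<lambda>v. cone_gen {v}) ` T"
    proof
      fix \<rho> assume "\<rho> \<in> rays_of \<Delta> (cone_gen T)"
      then have r: "\<rho> \<in> \<Delta>" "aff_dim \<rho> = 1" "\<rho> face_of cone_gen T" unfolding rays_of_def by auto
      define T' where "T' = {v \<in> T. v \<in> \<rho>}"
      have e: "\<rho> = cone_gen T'" unfolding T'_def by (rule face_cg[OF iT fT r(3) fan_zero[OF assms(1) r(1)]])
      have sT: "T' \<subseteq> T" unfolding T'_def by blast
      have "aff_dim (cone_gen T') = int (card T')"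
        by (rule aff_dim_cg) (use iT fT sT independent_mono finite_subset in blast)+
      then have "card T' = 1" using r(2) e by simp
      then obtain v where "T' = {v}" by (auto simp: card_1_singleton_iff)
      then show "\<rho> \<in> (\<lambda>v. cone_gen {v}) ` T" using e sT by blast
    qed
  next
    show "(\<lambda>v. cone_gen {v}) ` T \<subseteq> rays_of \<Delta> (cone_gen T)"
    proof
      fix \<rho> assume "\<rho> \<in> (\<lambda>v. cone_gen {v}) ` T"
      then obtain v where v: "v \<in> T" "\<rho> = cone_gen {v}" by blast
      have f: "\<rho> face_of cone_gen T" unfolding v(2) by (rule cg_face[OF iT fT]) (use v in simp)
      have "\<rho> \<in> \<Delta>" by (rule fan_face_in[OF assms(1) inT f]) (simp add: v(2) cg_zero)
      moreover have "aff_dim \<rho> = 1"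
      proof -
        have "independent {v}" using iT v(1) independent_mono by blast
        then have "aff_dim (cone_gen {v}) = int (card {v})" by (rule aff_dim_cg) simp
        then show ?thesis using v(2) by simp
      qed
      ultimately show "\<rho> \<in> rays_of \<Delta> (cone_gen T)" using f unfolding rays_of_def by blast
    qed
  qed
qed

lemma loc_ray_inj: assumes "finite S" "independent S"
  shows "inj_on (\<lambda>v. cone_gen {v}) S"
proof (rule inj_onI)
  fix v w assume "v \<in> S" "w \<in> S" "cone_gen {v} = cone_gen {w}"
  then have "{v} = {w}" using cg_inj[OF assms(2,1), of "{v}" "{w}"] by simp
  then show "v = w" by simp
qed

lemma G1: assumes fan: "simplicial_fan \<Delta>" shows "inj_on (rays_of \<Delta>) \<Delta>"
proof -
  have sub: "\<tau>1 \<subseteq> \<tau>2" if h: "\<tau>1 \<in> \<Delta>" "\<tau>2 \<in> \<Delta>" "rays_of \<Delta> \<tau>1 = rays_of \<Delta> \<tau>2" for \<tau>1 \<tau>2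
  proof -
    obtain S1 where S1: "finite S1" "independent S1" "\<tau>1 = cone_gen S1" using fan_cone[OF fan h(1)] by blast
    obtain S2 where S2: "finite S2" "independent S2" "\<tau>2 = cone_gen S2" using fan_cone[OF fan h(2)] by blast
    have R1: "rays_of \<Delta> \<tau>1 = (\<lambda>v. cone_gen {v}) ` S1"
      using loc_rays[OF fan _ S1(1,2) order_refl] h(1) S1(3) by simp
    have "S1 \<subseteq> \<tau>2"
    proof
      fix v assume v: "v \<in> S1"
      then have "cone_gen {v} \<in> rays_of \<Delta> \<tau>2" using R1 h(3) by blast
      then have "cone_gen {v} \<subseteq> \<tau>2" unfolding rays_of_def using face_of_imp_subset by blast
      moreover have "v \<in> cone_gen {v}" by (rule cg_base) simp_all
      ultimately show "v \<in> \<tau>2" by blast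
    qed
    then have "cone_gen S1 \<subseteq> cone_gen S2"
    proof (intro cg_sub)
      show "finite S1" by (rule S1(1))
    qed (use S2 cg_zero cg_add cg_scale in auto)
    then show ?thesis using S1 S2 by simp
  qed
  show ?thesis by (rule inj_onI) (use sub in blast)
qed

lemma msum_zero_mem: assumes "0 \<in> B" "x \<in> A" shows "x \<in> msum A B"
  unfolding msum_def using assms by force

lemma msum_zero_mem2: assumes "0 \<in> A" "x \<in> B" shows "x \<in> msum A B"
  unfolding msum_def using assms by force


lemma setup_max:
  assumes fan: "simplicial_fan \<Delta>" and lam: "lam \<in> \<Delta>"
    and mx: "\<forall>\<tau>. maximal_cone \<Delta> \<tau> \<longrightarrow> lam face_of \<tau>" and Z: "Z \<in> \<Delta>"
  obtains S where "finite S" "independent S" "cone_gen S \<in> \<Delta>" "Z \<subseteq> cone_gen S" "lam \<subseteq> cone_gen S"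
proof -
  obtain \<mu> where \<mu>: "maximal_cone \<Delta> \<mu>" "Z \<subseteq> \<mu>" using fan_max[OF fan Z] by blast
  have \<mu>D: "\<mu> \<in> \<Delta>" using \<mu>(1) unfolding maximal_cone_def by blast
  have "lam face_of \<mu>" using mx \<mu>(1) by blast
  then have l: "lam \<subseteq> \<mu>" by (rule face_of_imp_subset)
  obtain S where S: "finite S" "independent S" "\<mu> = cone_gen S" using fan_cone[OF fan \<mu>D] by blast
  show ?thesis by (rule that[OF S(1,2)]) (use S(3) \<mu>D \<mu>(2) l in simp_all)
qed

lemma lkD: assumes "\<alpha> \<in> lk \<Delta> \<gamma>" shows "\<alpha> \<in> \<Delta>" "\<alpha> \<inter> \<gamma> = {0}" "msum \<alpha> \<gamma> \<in> \<Delta>"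
  using assms unfolding lk_def by auto

lemma lkI: assumes "\<alpha> \<in> \<Delta>" "\<alpha> \<inter> \<gamma> = {0}" "msum \<alpha> \<gamma> \<in> \<Delta>" shows "\<alpha> \<in> lk \<Delta> \<gamma>"
  using assms unfolding lk_def by auto

lemma lk_fwd:
  assumes fan: "simplicial_fan \<Delta>" and lam: "lam \<in> \<Delta>"
    and mx: "\<forall>\<tau>. maximal_cone \<Delta> \<tau> \<longrightarrow> lam face_of \<tau>" and g: "\<gamma> \<in> \<Delta>"
    and a: "\<alpha> \<in> lk \<Delta> \<gamma>"
  shows "\<exists>\<alpha>'\<in>lk \<Delta> (msum \<gamma> lam). \<exists>B. B \<subseteq> rays_of \<Delta> lam - rays_of \<Delta> \<gamma> \<and>
           rays_of \<Delta> \<alpha> = rays_of \<Delta> \<alpha>' \<union> B"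
proof -
  note aD = lkD[OF a]
  obtain S where S: "finite S" "independent S" "cone_gen S \<in> \<Delta>" "msum \<alpha> \<gamma> \<subseteq> cone_gen S" "lam \<subseteq> cone_gen S"
    using setup_max[OF fan lam mx aD(3)] by blast
  have "\<alpha> \<subseteq> msum \<alpha> \<gamma>" using msum_zero_mem[OF fan_zero[OF fan g]] by blast
  then have aS: "\<alpha> \<subseteq> cone_gen S" using S(4) by blast
  have "\<gamma> \<subseteq> msum \<alpha> \<gamma>" using msum_zero_mem2[OF fan_zero[OF fan aD(1)]] by blast
  then have gS: "\<gamma> \<subseteq> cone_gen S" using S(4) by blast
  obtain Ta where Ta: "Ta \<subseteq> S" "\<alpha> = cone_gen Ta" using loc_face[OF fan S(3,1,2) aD(1) aS] by blast
  obtain Tg where Tg: "Tg \<subseteq> S" "\<gamma> = cone_gen Tg" using loc_face[OF fan S(3,1,2) g gS] by blast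
  obtain Tl where Tl: "Tl \<subseteq> S" "lam = cone_gen Tl" using loc_face[OF fan S(3,1,2) lam S(5)] by blast
  have fin: "finite Ta" "finite Tg" "finite Tl" using Ta(1) Tg(1) Tl(1) S(1) finite_subset by blast+
  have "cone_gen (Ta \<inter> Tg) = {0}" using cg_inter[OF S(2,1) Ta(1) Tg(1)] aD(2) Ta(2) Tg(2) by simp
  then have TaTg: "Ta \<inter> Tg = {}" using cg_eq_zero[OF S(2,1), of "Ta \<inter> Tg"] Ta(1) by blast
  have g': "msum \<gamma> lam = cone_gen (Tg \<union> Tl)" using cg_union[OF fin(2,3)] Tg(2) Tl(2) by simp
  define \<alpha>' where "\<alpha>' = cone_gen (Ta - Tl)"
  have s1: "Ta - Tl \<subseteq> S" "Tg \<union> Tl \<subseteq> S" "(Ta - Tl) \<union> (Tg \<union> Tl) \<subseteq> S" "Ta \<inter> Tl \<subseteq> S"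
    using Ta(1) Tg(1) Tl(1) by blast+
  have "\<alpha>' \<in> \<Delta>" unfolding \<alpha>'_def by (rule loc_in[OF fan S(3,1,2) s1(1)])
  moreover have "\<alpha>' \<inter> msum \<gamma> lam = {0}"
  proof -
    have "\<alpha>' \<inter> msum \<gamma> lam = cone_gen ((Ta - Tl) \<inter> (Tg \<union> Tl))"
      unfolding \<alpha>'_def g' by (rule cg_inter[OF S(2,1) s1(1,2)])
    moreover have "(Ta - Tl) \<inter> (Tg \<union> Tl) = {}" using TaTg by blast
    ultimately show ?thesis by (simp add: cg_empty)
  qed
  moreover have "msum \<alpha>' (msum \<gamma> lam) \<in> \<Delta>"
  proof -
    have "msum \<alpha>' (msum \<gamma> lam) = cone_gen ((Ta - Tl) \<union> (Tg \<union> Tl))"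
      unfolding \<alpha>'_def g' by (rule cg_union) (use fin in auto)
    then show ?thesis using loc_in[OF fan S(3,1,2) s1(3)] by simp
  qed
  ultimately have a'lk: "\<alpha>' \<in> lk \<Delta> (msum \<gamma> lam)" by (rule lkI)
  have Ra: "rays_of \<Delta> \<alpha> = (\<lambda>v. cone_gen {v}) ` Ta" unfolding Ta(2) by (rule loc_rays[OF fan S(3,1,2) Ta(1)])
  have Ra': "rays_of \<Delta> \<alpha>' = (\<lambda>v. cone_gen {v}) ` (Ta - Tl)" unfolding \<alpha>'_def by (rule loc_rays[OF fan S(3,1,2) s1(1)])
  have Rl: "rays_of \<Delta> lam = (\<lambda>v. cone_gen {v}) ` Tl" unfolding Tl(2) by (rule loc_rays[OF fan S(3,1,2) Tl(1)])
  have Rg: "rays_of \<Delta> \<gamma> = (\<lambda>v. cone_gen {v}) ` Tg" unfolding Tg(2) by (rule loc_rays[OF fan S(3,1,2) Tg(1)])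
  have inj: "inj_on (\<lambda>v. cone_gen {v}) S" by (rule loc_ray_inj[OF S(1,2)])
  define B where "B = (\<lambda>v. cone_gen {v}) ` (Ta \<inter> Tl)"
  have "rays_of \<Delta> \<alpha> = rays_of \<Delta> \<alpha>' \<union> B"
  proof -
    have "Ta = (Ta - Tl) \<union> (Ta \<inter> Tl)" by blast
    then show ?thesis unfolding Ra Ra' B_def by (metis image_Un)
  qed
  moreover have "B \<subseteq> rays_of \<Delta> lam - rays_of \<Delta> \<gamma>"
  proof
    fix x assume "x \<in> B"
    then obtain v where v: "v \<in> Ta" "v \<in> Tl" "x = cone_gen {v}" unfolding B_def by blast
    have "x \<notin> rays_of \<Delta> \<gamma>"
    proof
      assume "x \<in> rays_of \<Delta> \<gamma>"
      then obtain w where w: "w \<in> Tg" "x = cone_gen {w}" unfolding Rg by blast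
      have "v = w" using inj v w Ta(1) Tg(1) unfolding inj_on_def by blast
      then show False using TaTg v w by blast
    qed
    then show "x \<in> rays_of \<Delta> lam - rays_of \<Delta> \<gamma>" unfolding Rl using v by blast
  qed
  ultimately show ?thesis using a'lk by blast
qed

lemma lk_bwd:
  assumes fan: "simplicial_fan \<Delta>" and lam: "lam \<in> \<Delta>"
    and mx: "\<forall>\<tau>. maximal_cone \<Delta> \<tau> \<longrightarrow> lam face_of \<tau>" and g: "\<gamma> \<in> \<Delta>"
    and a': "\<alpha>' \<in> lk \<Delta> (msum \<gamma> lam)" and B: "B \<subseteq> rays_of \<Delta> lam - rays_of \<Delta> \<gamma>"
  shows "rays_of \<Delta> \<alpha>' \<union> B \<in> rays_of \<Delta> ` lk \<Delta> \<gamma>"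
proof -
  note aD = lkD[OF a']
  obtain S where S: "finite S" "independent S" "cone_gen S \<in> \<Delta>" "msum \<alpha>' (msum \<gamma> lam) \<subseteq> cone_gen S" "lam \<subseteq> cone_gen S"
    using setup_max[OF fan lam mx aD(3)] by blast
  have "\<alpha>' \<subseteq> msum \<alpha>' (msum \<gamma> lam)" using msum_zero_mem[OF msum_zero_mem[OF fan_zero[OF fan lam] fan_zero[OF fan g]]] by blast
  then have aS: "\<alpha>' \<subseteq> cone_gen S" using S(4) by blast
  have "\<gamma> \<subseteq> msum \<gamma> lam" using msum_zero_mem[OF fan_zero[OF fan lam]] by blast
  moreover have "msum \<gamma> lam \<subseteq> msum \<alpha>' (msum \<gamma> lam)" using msum_zero_mem2[OF fan_zero[OF fan aD(1)]] by blast
  ultimately have gS: "\<gamma> \<subseteq> cone_gen S" using S(4) by blast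
  obtain Ta where Ta: "Ta \<subseteq> S" "\<alpha>' = cone_gen Ta" using loc_face[OF fan S(3,1,2) aD(1) aS] by blast
  obtain Tg where Tg: "Tg \<subseteq> S" "\<gamma> = cone_gen Tg" using loc_face[OF fan S(3,1,2) g gS] by blast
  obtain Tl where Tl: "Tl \<subseteq> S" "lam = cone_gen Tl" using loc_face[OF fan S(3,1,2) lam S(5)] by blast
  have fin: "finite Ta" "finite Tg" "finite Tl" using Ta(1) Tg(1) Tl(1) S(1) finite_subset by blast+
  have g': "msum \<gamma> lam = cone_gen (Tg \<union> Tl)" using cg_union[OF fin(2,3)] Tg(2) Tl(2) by simp
  have s0: "Tg \<union> Tl \<subseteq> S" using Tg(1) Tl(1) by blast
  have "cone_gen (Ta \<inter> (Tg \<union> Tl)) = {0}" using cg_inter[OF S(2,1) Ta(1) s0] aD(2) Ta(2) g' by simp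
  then have TaTg: "Ta \<inter> (Tg \<union> Tl) = {}" using cg_eq_zero[OF S(2,1), of "Ta \<inter> (Tg \<union> Tl)"] Ta(1) by blast
  have Ra': "rays_of \<Delta> \<alpha>' = (\<lambda>v. cone_gen {v}) ` Ta" unfolding Ta(2) by (rule loc_rays[OF fan S(3,1,2) Ta(1)])
  have Rl: "rays_of \<Delta> lam = (\<lambda>v. cone_gen {v}) ` Tl" unfolding Tl(2) by (rule loc_rays[OF fan S(3,1,2) Tl(1)])
  have Rg: "rays_of \<Delta> \<gamma> = (\<lambda>v. cone_gen {v}) ` Tg" unfolding Tg(2) by (rule loc_rays[OF fan S(3,1,2) Tg(1)])
  have "B \<subseteq> (\<lambda>v. cone_gen {v}) ` (Tl - Tg)"
  proof
    fix x assume "x \<in> B"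
    then have x: "x \<in> (\<lambda>v. cone_gen {v}) ` Tl" "x \<notin> (\<lambda>v. cone_gen {v}) ` Tg" using B Rl Rg by blast+
    then obtain v where "v \<in> Tl" "x = cone_gen {v}" by blast
    then show "x \<in> (\<lambda>v. cone_gen {v}) ` (Tl - Tg)" using x(2) by blast
  qed
  then obtain TB where TB: "TB \<subseteq> Tl - Tg" "B = (\<lambda>v. cone_gen {v}) ` TB" by (auto simp: subset_image_iff)
  have finB: "finite TB" using TB(1) fin(3) finite_subset by blast
  have s1: "Ta \<union> TB \<subseteq> S" "(Ta \<union> TB) \<union> Tg \<subseteq> S" using Ta(1) TB(1) Tl(1) Tg(1) by blast+
  define \<alpha> where "\<alpha> = cone_gen (Ta \<union> TB)"
  have "\<alpha> \<in> \<Delta>" unfolding \<alpha>_def by (rule loc_in[OF fan S(3,1,2) s1(1)])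
  moreover have "\<alpha> \<inter> \<gamma> = {0}"
  proof -
    have "\<alpha> \<inter> \<gamma> = cone_gen ((Ta \<union> TB) \<inter> Tg)"
      unfolding \<alpha>_def Tg(2) by (rule cg_inter[OF S(2,1) s1(1) Tg(1)])
    moreover have "(Ta \<union> TB) \<inter> Tg = {}" using TaTg TB(1) by blast
    ultimately show ?thesis by (simp add: cg_empty)
  qed
  moreover have "msum \<alpha> \<gamma> \<in> \<Delta>"
  proof -
    have "msum \<alpha> \<gamma> = cone_gen ((Ta \<union> TB) \<union> Tg)"
      unfolding \<alpha>_def Tg(2) by (rule cg_union) (use fin finB in auto)
    then show ?thesis using loc_in[OF fan S(3,1,2) s1(2)] by simp
  qed
  ultimately have alk: "\<alpha> \<in> lk \<Delta> \<gamma>" by (rule lkI)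
  have "rays_of \<Delta> \<alpha> = (\<lambda>v. cone_gen {v}) ` (Ta \<union> TB)" unfolding \<alpha>_def by (rule loc_rays[OF fan S(3,1,2) s1(1)])
  then have "rays_of \<Delta> \<alpha> = rays_of \<Delta> \<alpha>' \<union> B" unfolding Ra' TB(2) by (simp add: image_Un)
  then show ?thesis using alk by (metis image_eqI)
qed

lemma lk_disj:
  assumes fan: "simplicial_fan \<Delta>" and lam: "lam \<in> \<Delta>" and g: "\<gamma> \<in> \<Delta>"
    and a': "\<alpha>' \<in> lk \<Delta> (msum \<gamma> lam)"
  shows "rays_of \<Delta> \<alpha>' \<inter> rays_of \<Delta> lam = {}"
proof (rule ccontr)
  assume "rays_of \<Delta> \<alpha>' \<inter> rays_of \<Delta> lam \<noteq> {}"
  then obtain \<rho> where r: "\<rho> \<in> rays_of \<Delta> \<alpha>'" "\<rho> \<in> rays_of \<Delta> lam" by blast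
  have r1: "\<rho> \<in> \<Delta>" "aff_dim \<rho> = 1" "\<rho> face_of \<alpha>'" using r(1) unfolding rays_of_def by auto
  have r2: "\<rho> face_of lam" using r(2) unfolding rays_of_def by auto
  have "lam \<subseteq> msum \<gamma> lam" using msum_zero_mem2[OF fan_zero[OF fan g]] by blast
  then have "\<rho> \<subseteq> \<alpha>' \<inter> msum \<gamma> lam" using face_of_imp_subset[OF r1(3)] face_of_imp_subset[OF r2] by blast
  then have "\<rho> \<subseteq> {0}" using lkD(2)[OF a'] by simp
  moreover have "0 \<in> \<rho>" by (rule fan_zero[OF fan r1(1)])
  ultimately have "\<rho> = {0}" by blast
  then show False using r1(2) by simp
qed

lemma lk_ne:
  assumes fan: "simplicial_fan \<Delta>" and lam: "lam \<in> \<Delta>"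
    and mx: "\<forall>\<tau>. maximal_cone \<Delta> \<tau> \<longrightarrow> lam face_of \<tau>" and g: "\<gamma> \<in> \<Delta>"
  shows "{0} \<in> lk \<Delta> (msum \<gamma> lam)"
proof -
  obtain S where S: "finite S" "independent S" "cone_gen S \<in> \<Delta>" "\<gamma> \<subseteq> cone_gen S" "lam \<subseteq> cone_gen S"
    using setup_max[OF fan lam mx g] by blast
  obtain Tg where Tg: "Tg \<subseteq> S" "\<gamma> = cone_gen Tg" using loc_face[OF fan S(3,1,2) g S(4)] by blast
  obtain Tl where Tl: "Tl \<subseteq> S" "lam = cone_gen Tl" using loc_face[OF fan S(3,1,2) lam S(5)] by blast
  have fin: "finite Tg" "finite Tl" using Tg(1) Tl(1) S(1) finite_subset by blast+
  have g': "msum \<gamma> lam = cone_gen (Tg \<union> Tl)" using cg_union[OF fin] Tg(2) Tl(2) by simp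
  have s0: "Tg \<union> Tl \<subseteq> S" using Tg(1) Tl(1) by blast
  have g'D: "msum \<gamma> lam \<in> \<Delta>" unfolding g' by (rule loc_in[OF fan S(3,1,2) s0])
  have zD: "{0} \<in> \<Delta>" using loc_in[OF fan S(3,1,2), of "{}"] by (simp add: cg_empty)
  have z0: "0 \<in> msum \<gamma> lam" by (rule fan_zero[OF fan g'D])
  have "msum {0} (msum \<gamma> lam) = msum \<gamma> lam" unfolding msum_def by auto
  then show ?thesis using zD z0 g'D by (intro lkI) auto
qed


lemma part2:
  assumes fan: "simplicial_fan \<Delta>" and lam: "lam \<in> \<Delta>"
    and mx: "\<forall>\<tau>. maximal_cone \<Delta> \<tau> \<longrightarrow> lam face_of \<tau>" and g: "\<gamma> \<in> \<Delta>"
  shows "Hpoly \<Delta> (lk \<Delta> \<gamma>) = Hpoly \<Delta> (lk \<Delta> (msum \<gamma> lam))"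
proof -
  define X where "X = rays_of \<Delta> ` lk \<Delta> (msum \<gamma> lam)"
  define L where "L = rays_of \<Delta> lam - rays_of \<Delta> \<gamma>"
  have finD: "finite \<Delta>" by (rule fanD1[OF fan])
  have lkD1: "lk \<Delta> x \<subseteq> \<Delta>" for x unfolding lk_def by blast
  have inj: "inj_on (rays_of \<Delta>) (lk \<Delta> x)" for x using inj_on_subset[OF G1[OF fan] lkD1] .
  have img: "rays_of \<Delta> ` lk \<Delta> \<gamma> = (\<lambda>(A,B). A \<union> B) ` (X \<times> Pow L)"
  proof
    show "rays_of \<Delta> ` lk \<Delta> \<gamma> \<subseteq> (\<lambda>(A,B). A \<union> B) ` (X \<times> Pow L)"
    proof
      fix E assume "E \<in> rays_of \<Delta> ` lk \<Delta> \<gamma>"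
      then obtain \<alpha> where a: "\<alpha> \<in> lk \<Delta> \<gamma>" "E = rays_of \<Delta> \<alpha>" by blast
      obtain \<alpha>' B where h: "\<alpha>' \<in> lk \<Delta> (msum \<gamma> lam)" "B \<subseteq> L" "rays_of \<Delta> \<alpha> = rays_of \<Delta> \<alpha>' \<union> B"
        using lk_fwd[OF fan lam mx g a(1)] unfolding L_def by blast
      have "(rays_of \<Delta> \<alpha>', B) \<in> X \<times> Pow L" using h unfolding X_def by blast
      moreover have "E = (\<lambda>(A,B). A \<union> B) (rays_of \<Delta> \<alpha>', B)" using a(2) h(3) by simp
      ultimately show "E \<in> (\<lambda>(A,B). A \<union> B) ` (X \<times> Pow L)" by (rule rev_image_eqI)
    qed
  next
    show "(\<lambda>(A,B). A \<union> B) ` (X \<times> Pow L) \<subseteq> rays_of \<Delta> ` lk \<Delta> \<gamma>"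
    proof
      fix E assume "E \<in> (\<lambda>(A,B). A \<union> B) ` (X \<times> Pow L)"
      then obtain A B where AB: "A \<in> X" "B \<subseteq> L" "E = A \<union> B" by auto
      then obtain \<alpha>' where "\<alpha>' \<in> lk \<Delta> (msum \<gamma> lam)" "A = rays_of \<Delta> \<alpha>'" unfolding X_def by blast
      then show "E \<in> rays_of \<Delta> ` lk \<Delta> \<gamma>" using lk_bwd[OF fan lam mx g] AB unfolding L_def by blast
    qed
  qed
  have fX: "finite X" unfolding X_def using finite_subset[OF lkD1 finD] by blast
  have fA: "finite A" if "A \<in> X" for A
  proof -
    have "A \<subseteq> \<Delta>" using that unfolding X_def rays_of_def by blast
    then show ?thesis using finD finite_subset by blast
  qed
  have dA: "A \<inter> L = {}" if "A \<in> X" for A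
    using that lk_disj[OF fan lam g] unfolding X_def L_def by blast
  have fL: "finite L" unfolding L_def rays_of_def using finD by simp
  have ne: "X \<noteq> {}" unfolding X_def using lk_ne[OF fan lam mx g] by blast
  have "Hpoly \<Delta> (lk \<Delta> \<gamma>) = (\<Sum>A\<in>rays_of \<Delta> ` lk \<Delta> \<gamma>. gfun (\<lambda>\<rho>. monom (prim \<rho>)) (\<Union>(rays_of \<Delta> ` lk \<Delta> \<gamma>)) A)"
    by (rule Hpoly_img[OF inj])
  also have "\<dots> = (\<Sum>A\<in>X. gfun (\<lambda>\<rho>. monom (prim \<rho>)) (\<Union>X) A)"
    unfolding img by (rule comb[OF fX fA dA fL ne])
  also have "\<dots> = Hpoly \<Delta> (lk \<Delta> (msum \<gamma> lam))"
    unfolding X_def by (rule Hpoly_img[OF inj, symmetric])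
  finally show ?thesis .
qed

theorem lemma2p1:
  fixes \<sigma> :: "(real^'n) set" and \<Delta> :: "(real^'n) set set" and lam :: "(real^'n) set"
  assumes "rational_polyhedral_cone \<sigma>" and "strongly_convex \<sigma>"
    and "rational_simplicial_subdivision \<Delta> \<sigma>"
    and "lam \<in> \<Delta>"
    and "\<forall>\<tau>. maximal_cone \<Delta> \<tau> \<longrightarrow> lam face_of \<tau>"
  shows "Hpoly \<Delta> \<Delta> = Hpoly \<Delta> (lk \<Delta> lam) \<and>
         (\<forall>\<gamma>\<in>\<Delta>. Hpoly \<Delta> (lk \<Delta> \<gamma>) = Hpoly \<Delta> (lk \<Delta> (msum \<gamma> lam)))"
proof -
  have fan: "simplicial_fan \<Delta>" using assms(3) unfolding rational_simplicial_subdivision_def by blast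
  have p2: "\<forall>\<gamma>\<in>\<Delta>. Hpoly \<Delta> (lk \<Delta> \<gamma>) = Hpoly \<Delta> (lk \<Delta> (msum \<gamma> lam))"
    using part2[OF fan assms(4,5)] by blast
  obtain S where S: "finite S" "independent S" "lam = cone_gen S" using fan_cone[OF fan assms(4)] by blast
  have zD: "{0} \<in> \<Delta>" using loc_in[OF fan _ S(1,2), of "{}"] assms(4) S(3) by (simp add: cg_empty)
  have lk0: "lk \<Delta> {0} = \<Delta>"
  proof
    show "lk \<Delta> {0} \<subseteq> \<Delta>" unfolding lk_def by blast
  next
    show "\<Delta> \<subseteq> lk \<Delta> {0}"
    proof
      fix \<gamma> assume g: "\<gamma> \<in> \<Delta>"
      have "0 \<in> \<gamma>" by (rule fan_zero[OF fan g])
      moreover have "msum \<gamma> {0} = \<gamma>" unfolding msum_def by auto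
      ultimately show "\<gamma> \<in> lk \<Delta> {0}" using g by (intro lkI) auto
    qed
  qed
  have m0: "msum {0} lam = lam" unfolding msum_def by auto
  have "Hpoly \<Delta> \<Delta> = Hpoly \<Delta> (lk \<Delta> lam)" using p2 zD lk0 m0 by metis
  then show ?thesis using p2 by blast
qed


end
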